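(* Define $g(n)$ for $n\ge1$ greedily: $g(n)$ is the least positive integer such that $g(n)\notin\{g(1),\dots,g(n-1)\}$ and $g(n)-n\notin\{g(i)-i: 1\le i\le n-1\}$. Then $g(n)=f(n)$ for all $n\ge 1$. (Equivalently, $(f(n))_{n\ge1}$ is the lexicographically least sequence of distinct positive integers such that the integers $f(n)-n$, $n\ge1$, are pairwise distinct.)
   Context: $\mathbb{N}=\{0,1,2,\dots\}$. The sequence $f:\mathbb{N}\to\mathbb{N}$ is defined greedily: $f(0)=0$, and for $n\ge1$, $f(n)$ is the least natural number such that (i) $f(n)\notin\{f(0),f(1),\dots,f(n-1)\}$ and (ii) $\sum_{1\le i\le n} f(i)$ is divisible by $n$. *)

theory Defs
  imports Main
begin

text \<open>fseq n = [f(0), f(1), ..., f(n)] for the greedy sequence f of the paper: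
  f(0) = 0, and f(n) (n \<ge> 1) is the least natural number not among f(0..n-1)
  such that n divides f(1) + ... + f(n).\<close>
primrec fseq :: "nat \<Rightarrow> nat list" where
  "fseq 0 = [0]"
| "fseq (Suc n) =
     (let xs = fseq n
      in xs @ [LEAST v. v \<notin> set xs \<and> Suc n dvd (sum_list (tl xs) + v)])"

definition f :: "nat \<Rightarrow> nat" where
  "f n = fseq n ! n"

primrec gseq :: "nat \<Rightarrow> nat list" where
  "gseq 0 = []"
| "gseq (Suc n) =
     (let xs = gseq n
      in xs @ [LEAST v. 0 < v \<and> v \<notin> set xs \<and>
                 int v - int (Suc n) \<notin> {int (xs ! i) - int (Suc i) | i. i < n}])"

definition g :: "nat \<Rightarrow> nat" where
  "g n = gseq n ! (n - 1)"

end

theory Submission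
  imports Defs
begin

lemma f0: "f 0 = 0" by (simp add: f_def)

lemma fseq_len: "length (fseq n) = Suc n"
  by (induction n) (simp_all add: Let_def)

lemma fseq_nth: "k \<le> n \<Longrightarrow> fseq n ! k = f k"
proof (induction n)
  case 0 then show ?case by (simp add: f_def)
next
  case (Suc n)
  show ?case
  proof (cases "k \<le> n")
    case True
    then have "fseq (Suc n) ! k = fseq n ! k" by (simp add: Let_def nth_append fseq_len)
    with Suc True show ?thesis by simp
  next
    case False
    then have "k = Suc n" using Suc.prems by simp
    then show ?thesis by (simp add: f_def)
  qed
qed

lemma fseq_set: "set (fseq n) = f ` {0..n}"
proof -
  have "set (fseq n) = {fseq n ! i | i. i < Suc n}" by (simp add: set_conv_nth fseq_len)
  also have "\<dots> = {f i | i. i < Suc n}" using fseq_nth by (metis less_Suc_eq_le)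
  also have "\<dots> = f ` {0..n}" by auto
  finally show ?thesis .
qed

lemma fseq_Suc_L: "f (Suc n) = (LEAST v. v \<notin> set (fseq n) \<and> Suc n dvd (sum_list (tl (fseq n)) + v))"
  by (simp add: f_def Let_def nth_append fseq_len)

lemma fseq_Suc: "fseq (Suc n) = fseq n @ [f (Suc n)]"
  using fseq_Suc_L[of n] by (simp add: Let_def)

lemma fseq_tl_sum: "sum_list (tl (fseq n)) = (\<Sum>i=1..n. f i)"
proof (induction n)
  case 0 then show ?case by simp
next
  case (Suc n)
  have "fseq n \<noteq> []" using fseq_len[of n] by auto
  then show ?case using Suc by (simp del: fseq.simps add: fseq_Suc tl_append2)
qed

lemma f_Suc: "f (Suc n) = (LEAST v. v \<notin> f ` {0..n} \<and> Suc n dvd ((\<Sum>i=1..n. f i) + v))"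
  using fseq_Suc_L[of n] by (simp add: fseq_set fseq_tl_sum)

lemma key:
  fixes n c v :: nat
  assumes "Suc n dvd n*c + v" "v < c + Suc n"
  shows "v \<le> c"
proof (rule ccontr)
  assume "\<not> v \<le> c"
  then have "n*c + v = Suc n * c + (v - c)" by simp
  with assms(1) have "Suc n dvd (v - c)"
    by (metis dvd_add_right_iff dvd_triv_left)
  moreover have "0 < v - c" "v - c < Suc n" using \<open>\<not> v \<le> c\<close> assms(2) by auto
  ultimately show False using nat_dvd_not_less by blast
qed

lemma step:
  fixes n c :: nat
  assumes S: "(\<Sum>i=1..n. f i) = n*c" and c1: "1 \<le> c"
    and low: "{1..<c} \<subseteq> f`{1..n}" and up: "\<forall>k\<in>{1..n}. f k \<le> c+n"
  shows "f (Suc n) = (if c \<in> f`{0..n} then c+n+1 else c)"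
proof (cases "c \<in> f`{0..n}")
  case True
  have d: "Suc n dvd n*c + (c+n+1)" 
  proof -
    have e: "n*c + (c+n+1) = Suc n * (c+1)" by simp
    show ?thesis unfolding e by (rule dvd_triv_left)
  qed
  have nu: "c+n+1 \<notin> f`{0..n}"
  proof
    assume "c+n+1 \<in> f`{0..n}"
    then obtain k where k: "k \<in> {0..n}" "f k = c+n+1" by auto
    show False
    proof (cases "k = 0")
      case True with k f0 show False by simp
    next
      case False
      then have "k \<in> {1..n}" using k by auto
      then have "f k \<le> c+n" using up by blast
      with k show False by simp
    qed
  qed
  have "(LEAST v. v \<notin> f ` {0..n} \<and> Suc n dvd ((\<Sum>i=1..n. f i) + v)) = c+n+1"
  proof (rule Least_equality)
    show "c + n + 1 \<notin> f ` {0..n} \<and> Suc n dvd (\<Sum>i = 1..n. f i) + (c + n + 1)"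
      using nu d S by simp
  next
    fix y assume y: "y \<notin> f ` {0..n} \<and> Suc n dvd (\<Sum>i = 1..n. f i) + y"
    show "c + n + 1 \<le> y"
    proof (rule ccontr)
      assume "\<not> c + n + 1 \<le> y"
      then have "y \<le> c" using key[of n c y] y S by simp
      show False
      proof (cases "y = c")
        case True with y \<open>c \<in> f`{0..n}\<close> show False by simp
      next
        case False
        show False
        proof (cases "y = 0")
          case True then have "y \<in> f`{0..n}" using f0 by force
          with y show False by simp
        next
          case F2: False
          then have "y \<in> f`{1..n}" using low False \<open>y \<le> c\<close> by force
          then have "y \<in> f`{0..n}" by auto
          with y show False by simp
        qed
      qed
    qed
  qed
  then show ?thesis using True f_Suc[of n] by simp
next
  case False
  have d: "Suc n dvd n*c + c" 
  proof -
    have e: "n*c + c = Suc n * c" by simp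
    show ?thesis unfolding e by (rule dvd_triv_left)
  qed
  have "(LEAST v. v \<notin> f ` {0..n} \<and> Suc n dvd ((\<Sum>i=1..n. f i) + v)) = c"
  proof (rule Least_equality)
    show "c \<notin> f ` {0..n} \<and> Suc n dvd (\<Sum>i = 1..n. f i) + c"
      using False d S by simp
  next
    fix y assume y: "y \<notin> f ` {0..n} \<and> Suc n dvd (\<Sum>i = 1..n. f i) + y"
    show "c \<le> y"
    proof (rule ccontr)
      assume "\<not> c \<le> y"
      show False
      proof (cases "y = 0")
        case True then have "y \<in> f`{0..n}" using f0 by force
        with y show False by simp
      next
        case F2: False
        then have "y \<in> f`{1..n}" using low \<open>\<not> c \<le> y\<close> by force
        then have "y \<in> f`{0..n}" by auto
        with y show False by simp
      qed
    qed
  qed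
  then show ?thesis using False f_Suc[of n] by simp
qed

lemma inv:
  "1 \<le> n \<Longrightarrow> \<exists>c. (\<Sum>i=1..n. f i) = n*c \<and> 1 \<le> c \<and> c \<le> n \<and> {1..<c} \<subseteq> f`{1..n}
     \<and> (\<forall>k\<in>{1..n}. f k \<le> c+n)
     \<and> (\<lambda>k. int (f k) - int k) ` {1..n} = {int c - int n .. int c - 1}"
proof (induction n rule: dec_induct)
  case base
  have "f 1 = (LEAST v. v \<notin> f ` {0..0} \<and> Suc 0 dvd ((\<Sum>i=1..0. f i) + v))"
    using f_Suc[of 0] by simp
  also have "\<dots> = 1"
    by (rule Least_equality) (auto simp: f0)
  finally have f1: "f 1 = 1" .
  then have f1': "f (Suc 0) = Suc 0" by simp
  show ?case by (rule exI[of _ 1]) (auto simp: f1 f1')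
next
  case (step n)
  then obtain c where S: "(\<Sum>i=1..n. f i) = n*c" and c1: "1 \<le> c" and cn: "c \<le> n"
    and low: "{1..<c} \<subseteq> f`{1..n}" and up: "\<forall>k\<in>{1..n}. f k \<le> c+n"
    and D: "(\<lambda>k. int (f k) - int k) ` {1..n} = {int c - int n .. int c - 1}" by blast
  have fs: "f (Suc n) = (if c \<in> f`{0..n} then c+n+1 else c)" by (rule Submission.step[OF S c1 low up])
  have iv: "{1..Suc n} = insert (Suc n) {1..n}" by auto
  show ?case
  proof (cases "c \<in> f`{0..n}")
    case True
    then have fc: "f (Suc n) = c+n+1" using fs by simp
    have cin: "c \<in> f`{1..n}" using True c1 f0
      by (smt (verit, ccfv_SIG) atLeastAtMost_iff image_iff less_one linorder_not_le)
    show ?thesis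
    proof (rule exI[of _ "c+1"], intro conjI)
      show "(\<Sum>i=1..Suc n. f i) = Suc n * (c+1)" using S fc by simp
      show "1 \<le> c+1" by simp
      show "c+1 \<le> Suc n" using cn by simp
      have "{1..<c+1} = insert c {1..<c}" using c1 by auto
      then have "{1..<c+1} \<subseteq> f`{1..n}" using low cin by simp
      moreover have "f`{1..n} \<subseteq> f`{1..Suc n}" by (rule image_mono) auto
      ultimately show "{1..<c+1} \<subseteq> f`{1..Suc n}" by blast
      show "\<forall>k\<in>{1..Suc n}. f k \<le> c + 1 + Suc n"
      proof
        fix k assume "k \<in> {1..Suc n}"
        then have "k = Suc n \<or> k \<in> {1..n}" by auto
        then show "f k \<le> c + 1 + Suc n" using up fc by fastforce
      qed
      have "(\<lambda>k. int (f k) - int k) ` {1..Suc n} = insert (int c) {int c - int n .. int c - 1}"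
        unfolding iv using D fc by simp
      also have "\<dots> = {int (c+1) - int (Suc n) .. int (c+1) - 1}" by auto
      finally show "(\<lambda>k. int (f k) - int k) ` {1..Suc n} = {int (c+1) - int (Suc n) .. int (c+1) - 1}" .
    qed
  next
    case False
    then have fc: "f (Suc n) = c" using fs by simp
    show ?thesis
    proof (rule exI[of _ "c"], intro conjI)
      show "(\<Sum>i=1..Suc n. f i) = Suc n * c" using S fc by simp
      show "1 \<le> c" by fact
      show "c \<le> Suc n" using cn by simp
      show "{1..<c} \<subseteq> f`{1..Suc n}" using low by (auto simp: iv)
      show "\<forall>k\<in>{1..Suc n}. f k \<le> c + Suc n"
      proof
        fix k assume "k \<in> {1..Suc n}"
        then have "k = Suc n \<or> k \<in> {1..n}" by auto
        then show "f k \<le> c + Suc n" using up fc by fastforce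
      qed
      have "(\<lambda>k. int (f k) - int k) ` {1..Suc n} = insert (int c - int (Suc n)) {int c - int n .. int c - 1}"
        unfolding iv using D fc by simp
      also have "\<dots> = {int c - int (Suc n) .. int c - 1}" by auto
      finally show "(\<lambda>k. int (f k) - int k) ` {1..Suc n} = {int c - int (Suc n) .. int c - 1}" .
    qed
  qed
qed

lemma gstep:
  "(LEAST v. 0 < v \<and> v \<notin> f`{1..n} \<and> int v - int (Suc n) \<notin> (\<lambda>k. int (f k) - int k) ` {1..n}) = f (Suc n)"
proof (cases "n = 0")
  case True
  obtain c where "(\<Sum>i=1..1. f i) = 1*c" "1 \<le> c" "c \<le> 1" using inv[of 1] by auto
  then have f1: "f 1 = 1" by simp
  show ?thesis using True f1 by (intro Least_equality) auto
next
  case False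
  then obtain c where S: "(\<Sum>i=1..n. f i) = n*c" and c1: "1 \<le> c" and cn: "c \<le> n"
    and low: "{1..<c} \<subseteq> f`{1..n}" and up: "\<forall>k\<in>{1..n}. f k \<le> c+n"
    and D: "(\<lambda>k. int (f k) - int k) ` {1..n} = {int c - int n .. int c - 1}" using inv[of n] by auto
  have fs: "f (Suc n) = (if c \<in> f`{0..n} then c+n+1 else c)" by (rule step[OF S c1 low up])
  show ?thesis
  proof (cases "c \<in> f`{0..n}")
    case True
    then have fc: "f (Suc n) = c+n+1" using fs by simp
    have nu: "c+n+1 \<notin> f`{1..n}" using up by force
    show ?thesis unfolding fc D
    proof (rule Least_equality)
      show "0 < c + n + 1 \<and> c + n + 1 \<notin> f ` {1..n} \<and> int (c + n + 1) - int (Suc n) \<notin> {int c - int n..int c - 1}"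
        using nu by simp
    next
      fix y assume y: "0 < y \<and> y \<notin> f ` {1..n} \<and> int y - int (Suc n) \<notin> {int c - int n..int c - 1}"
      show "c + n + 1 \<le> y"
      proof (rule ccontr)
        assume a: "\<not> c + n + 1 \<le> y"
        show False
        proof (cases "y < c")
          case True then have "y \<in> {1..<c}" using y by auto
          then show False using y low by blast
        next
          case F: False
          show False
          proof (cases "y = c")
            case True
            then have "y \<in> f`{1..n}" using \<open>c \<in> f`{0..n}\<close> c1 f0
              by (smt (verit, ccfv_SIG) atLeastAtMost_iff image_iff less_one linorder_not_le)
            with y show False by simp
          next
            case False
            then show False using y a F by auto
          qed
        qed
      qed
    qed
  next
    case False
    then have fc: "f (Suc n) = c" using fs by simp
    have nu: "c \<notin> f`{1..n}" using False by auto
    show ?thesis unfolding fc D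
    proof (rule Least_equality)
      show "0 < c \<and> c \<notin> f ` {1..n} \<and> int c - int (Suc n) \<notin> {int c - int n..int c - 1}"
        using nu c1 by simp
    next
      fix y assume y: "0 < y \<and> y \<notin> f ` {1..n} \<and> int y - int (Suc n) \<notin> {int c - int n..int c - 1}"
      show "c \<le> y"
      proof (rule ccontr)
        assume "\<not> c \<le> y"
        then have "y \<in> {1..<c}" using y by auto
        then show False using y low by blast
      qed
    qed
  qed
qed

lemma gseq_eq: "gseq n = map f [1..<Suc n]"
proof (induction n)
  case 0 then show ?case by simp
next
  case (Suc n)
  have st: "set (map f [1..<Suc n]) = f ` {1..n}" by auto
  have ds: "{int (map f [1..<Suc n] ! i) - int (Suc i) | i. i < n} = (\<lambda>k. int (f k) - int k) ` {1..n}"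
  proof (rule set_eqI, rule iffI)
    fix x assume "x \<in> {int (map f [1..<Suc n] ! i) - int (Suc i) | i. i < n}"
    then obtain i where "i < n" "x = int (f (Suc i)) - int (Suc i)" by (auto simp del: upt_Suc)
    then show "x \<in> (\<lambda>k. int (f k) - int k) ` {1..n}" by force
  next
    fix x assume "x \<in> (\<lambda>k. int (f k) - int k) ` {1..n}"
    then obtain k where k: "k \<in> {1..n}" "x = int (f k) - int k" by auto
    have "k - 1 < n" "Suc (k-1) = k" using k by auto
    have k1: "1 \<le> k" "k \<le> n" using k by auto
    have l: "k - 1 < length [1..<Suc n]" using k1 by simp
    have u: "[1..<Suc n] ! (k-1) = 1 + (k-1)" by (rule nth_upt) (use k1 in linarith)
    have "map f [1..<Suc n] ! (k-1) = f ([1..<Suc n] ! (k-1))" using l by (rule nth_map)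
    also have "\<dots> = f k" using u k1 by simp
    finally have "map f [1..<Suc n] ! (k-1) = f k" .
    then have "x = int (map f [1..<Suc n] ! (k-1)) - int (Suc (k-1))" using k(2) \<open>Suc (k-1) = k\<close> by (simp del: upt_Suc)
    then show "x \<in> {int (map f [1..<Suc n] ! i) - int (Suc i) | i. i < n}" using \<open>k - 1 < n\<close> by blast
  qed
  have "gseq (Suc n) = map f [1..<Suc n] @ [LEAST v. 0 < v \<and> v \<notin> set (map f [1..<Suc n]) \<and>
                 int v - int (Suc n) \<notin> {int (map f [1..<Suc n] ! i) - int (Suc i) | i. i < n}]"
    by (simp only: gseq.simps Let_def Suc.IH)
  also have "\<dots> = map f [1..<Suc n] @ [f (Suc n)]" unfolding st ds gstep ..
  also have "\<dots> = map f [1..<Suc (Suc n)]" by simp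
  finally show ?case .
qed

theorem mainTheorem3:
  fixes n :: nat
  assumes "1 \<le> n"
  shows "g n = f n"
  using assms by (simp add: g_def gseq_eq nth_map del: upt_Suc)

end
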